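(* Let $n\ge 2$, let $\mathcal{S}\subseteq(\mathbb{C}^d)^{\otimes n}$ be the permutation-symmetric subspace, and let $X,Y$ be $d\times d$ complex matrices. Suppose $|\psi\rangle\in\mathcal{S}$, $X_{(1)}|\psi\rangle\in\mathcal{S}$ and $Y_{(2)}|\psi\rangle\in\mathcal{S}$. Then $X_{(1)}Y_{(2)}|\psi\rangle\in\mathcal{S}$ if and only if $[X_{(1)},Y_{(1)}]|\psi\rangle=0$.
   Context: $\mathcal{S}$ is the set of vectors in $(\mathbb{C}^d)^{\otimes n}$ invariant under all permutations of the $n$ tensor factors. For a $d\times d$ matrix $X$ and $1\le k\le n$, $X_{(k)}$ denotes the operator on $(\mathbb{C}^d)^{\otimes n}$ acting as $X$ on the $k$-th tensor factor and as the identity on all others. $[P,Q]=PQ-QP$. *)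

theory Defs
  imports "HOL-Analysis.Analysis" "HOL-Combinatorics.Permutations"
begin

text \<open>A vector in (C^d)^{\<otimes>n} is represented by its coordinates: a function
  from index tuples (lists of length n over the finite basis type 'd, d = CARD('d))
  to complex numbers. Values on lists of other lengths are irrelevant. Tensor factors are numbered from 0.\<close>

definition apply_at :: "nat \<Rightarrow> complex^'d^'d \<Rightarrow> ('d::finite list \<Rightarrow> complex) \<Rightarrow> ('d list \<Rightarrow> complex)" where
  "apply_at k X \<psi> = (\<lambda>xs. \<Sum>j\<in>UNIV. X $ (xs ! k) $ j * \<psi> (xs[k := j]))"

definition permute_factors :: "nat \<Rightarrow> (nat \<Rightarrow> nat) \<Rightarrow> ('d list \<Rightarrow> complex) \<Rightarrow> ('d list \<Rightarrow> complex)" where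
  "permute_factors n \<sigma> \<psi> = (\<lambda>xs. \<psi> (map (\<lambda>i. xs ! \<sigma> i) [0..<n]))"

definition in_sym_subspace :: "nat \<Rightarrow> ('d list \<Rightarrow> complex) \<Rightarrow> bool" where
  "in_sym_subspace n \<psi> \<longleftrightarrow>
     (\<forall>\<sigma>. \<sigma> permutes {..<n} \<longrightarrow> (\<forall>xs. length xs = n \<longrightarrow> permute_factors n \<sigma> \<psi> xs = \<psi> xs))"

end

theory Submission
  imports Defs
begin

definition eqv :: "nat \<Rightarrow> ('d list \<Rightarrow> complex) \<Rightarrow> ('d list \<Rightarrow> complex) \<Rightarrow> bool" where
  "eqv n f g \<longleftrightarrow> (\<forall>xs. length xs = n \<longrightarrow> f xs = g xs)"

lemma eqv_refl: "eqv n f f" by (simp add: eqv_def)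
lemma eqv_sym: "eqv n f g \<Longrightarrow> eqv n g f" by (simp add: eqv_def)
lemma eqv_trans: "eqv n f g \<Longrightarrow> eqv n g h \<Longrightarrow> eqv n f h" by (simp add: eqv_def)

lemma sym_eqv: "in_sym_subspace n \<psi> \<longleftrightarrow> (\<forall>\<sigma>. \<sigma> permutes {..<n} \<longrightarrow> eqv n (permute_factors n \<sigma> \<psi>) \<psi>)"
  by (simp add: in_sym_subspace_def eqv_def)

lemma apply_cong: "eqv n f g \<Longrightarrow> eqv n (apply_at k X f) (apply_at k X g)"
  by (simp add: eqv_def apply_at_def)

lemma perm_cong: "eqv n f g \<Longrightarrow> eqv n (permute_factors n \<sigma> f) (permute_factors n \<sigma> g)"
  by (simp add: eqv_def permute_factors_def)

lemma apply_comm: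
  fixes X Y :: "complex^'d::finite^'d"
  assumes "a \<noteq> b"
  shows "apply_at a X (apply_at b Y f) = apply_at b Y (apply_at a X f)"
proof
  fix xs :: "'d list"
  have "apply_at a X (apply_at b Y f) xs = (\<Sum>j\<in>UNIV. \<Sum>i\<in>UNIV. X $ (xs ! a) $ j * (Y $ (xs ! b) $ i * f ((xs[a := j])[b := i])))"
    using assms by (simp add: apply_at_def sum_distrib_left nth_list_update)
  also have "\<dots> = (\<Sum>i\<in>UNIV. \<Sum>j\<in>UNIV. Y $ (xs ! b) $ i * (X $ (xs ! a) $ j * f ((xs[b := i])[a := j])))"
    using assms by (subst sum.swap) (simp add: list_update_swap mult.left_commute)
  also have "\<dots> = apply_at b Y (apply_at a X f) xs"
    using assms by (simp add: apply_at_def sum_distrib_left nth_list_update)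
  finally show "apply_at a X (apply_at b Y f) xs = apply_at b Y (apply_at a X f) xs" .
qed

lemma perm_apply:
  fixes X :: "complex^'d::finite^'d"
  assumes s: "\<sigma> permutes {..<n}" and k: "k < n"
  shows "eqv n (permute_factors n \<sigma> (apply_at k X \<phi>)) (apply_at (\<sigma> k) X (permute_factors n \<sigma> \<phi>))"
  unfolding eqv_def
proof (intro allI impI)
  fix xs :: "'d list" assume len: "length xs = n"
  have sk: "\<sigma> k < n" using permutes_in_image[OF s] k by auto
  have inj: "\<And>i. \<sigma> i = \<sigma> k \<longleftrightarrow> i = k" using permutes_inj[OF s] by (auto dest: injD)
  have inj': "\<And>i. \<sigma> k = \<sigma> i \<longleftrightarrow> i = k" using inj by metis
  have si: "\<And>i. i < n \<Longrightarrow> \<sigma> i < n" using permutes_in_image[OF s] by auto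
  have e1: "map (\<lambda>i. xs ! \<sigma> i) [0..<n] ! k = xs ! \<sigma> k" using k by simp
  have e2: "\<And>j. (map (\<lambda>i. xs ! \<sigma> i) [0..<n])[k := j] = map (\<lambda>i. (xs[\<sigma> k := j]) ! \<sigma> i) [0..<n]"
    by (rule nth_equalityI) (auto simp: nth_list_update len si inj inj' k)
  show "permute_factors n \<sigma> (apply_at k X \<phi>) xs = apply_at (\<sigma> k) X (permute_factors n \<sigma> \<phi>) xs"
    by (simp add: permute_factors_def apply_at_def e1 e2)
qed

lemma move_index:
  assumes n: "a0 < n" "a < n" and s0: "in_sym_subspace n \<psi>" and s1: "in_sym_subspace n (apply_at a0 X \<psi>)"
  shows "eqv n (apply_at a X \<psi>) (apply_at a0 X \<psi>)"
proof -
  let ?t = "Transposition.transpose a0 a"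
  have tp: "?t permutes {..<n}" using n by (intro permutes_swap_id) auto
  have "eqv n (permute_factors n ?t (apply_at a0 X \<psi>)) (apply_at (?t a0) X (permute_factors n ?t \<psi>))"
    by (rule perm_apply[OF tp n(1)])
  hence "eqv n (permute_factors n ?t (apply_at a0 X \<psi>)) (apply_at a X (permute_factors n ?t \<psi>))" by simp
  moreover have "eqv n (apply_at a X (permute_factors n ?t \<psi>)) (apply_at a X \<psi>)"
    using s0 tp by (intro apply_cong) (simp add: sym_eqv)
  moreover have "eqv n (permute_factors n ?t (apply_at a0 X \<psi>)) (apply_at a0 X \<psi>)"
    using s1 tp by (simp add: sym_eqv)
  ultimately show ?thesis by (meson eqv_sym eqv_trans)
qed

theorem lemma2:
  fixes n :: nat and X Y :: "complex^'d::finite^'d" and \<psi> :: "'d list \<Rightarrow> complex"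
  assumes "n \<ge> 2"
    and "in_sym_subspace n \<psi>"
    and "in_sym_subspace n (apply_at 0 X \<psi>)"
    and "in_sym_subspace n (apply_at 1 Y \<psi>)"
  shows "in_sym_subspace n (apply_at 0 X (apply_at 1 Y \<psi>)) \<longleftrightarrow>
    (\<forall>xs. length xs = n \<longrightarrow>
       apply_at 0 X (apply_at 0 Y \<psi>) xs - apply_at 0 Y (apply_at 0 X \<psi>) xs = 0)"
proof -
  note s0 = assms(2) and sX = assms(3) and sY = assms(4)
  have n0: "0 < n" and n1: "1 < n" using assms(1) by auto
  have Xm: "\<And>a. a < n \<Longrightarrow> eqv n (apply_at a X \<psi>) (apply_at 0 X \<psi>)"
    using move_index[OF n0 _ s0 sX] .
  have Ym: "\<And>b. b < n \<Longrightarrow> eqv n (apply_at b Y \<psi>) (apply_at 1 Y \<psi>)"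
    using move_index[OF n1 _ s0 sY] .
  have Y01: "eqv n (apply_at 1 Y \<psi>) (apply_at 0 Y \<psi>)" using Ym[OF n0] by (rule eqv_sym)
  let ?\<phi> = "apply_at 0 X (apply_at 1 Y \<psi>)"
  have phi: "eqv n ?\<phi> (apply_at 0 X (apply_at 0 Y \<psi>))" using Y01 by (rule apply_cong)
  have gen: "\<And>\<sigma>. \<sigma> permutes {..<n} \<Longrightarrow>
     eqv n (permute_factors n \<sigma> ?\<phi>) (apply_at (\<sigma> 0) X (apply_at 0 Y \<psi>))"
  proof -
    fix \<sigma> assume s: "\<sigma> permutes {..<n}"
    have a1: "eqv n (permute_factors n \<sigma> ?\<phi>) (apply_at (\<sigma> 0) X (permute_factors n \<sigma> (apply_at 1 Y \<psi>)))"
      by (rule perm_apply[OF s n0])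
    have a2: "eqv n (permute_factors n \<sigma> (apply_at 1 Y \<psi>)) (apply_at (\<sigma> 1) Y (permute_factors n \<sigma> \<psi>))"
      by (rule perm_apply[OF s n1])
    have a3: "eqv n (apply_at (\<sigma> 1) Y (permute_factors n \<sigma> \<psi>)) (apply_at (\<sigma> 1) Y \<psi>)"
      using s0 s by (intro apply_cong) (simp add: sym_eqv)
    have s1: "\<sigma> 1 < n" using permutes_in_image[OF s] n1 by auto
    have a4: "eqv n (apply_at (\<sigma> 1) Y \<psi>) (apply_at 0 Y \<psi>)"
      using Ym[OF s1] Y01 by (rule eqv_trans)
    have "eqv n (permute_factors n \<sigma> (apply_at 1 Y \<psi>)) (apply_at 0 Y \<psi>)"
      using a2 a3 a4 by (meson eqv_trans)
    then show "eqv n (permute_factors n \<sigma> ?\<phi>) (apply_at (\<sigma> 0) X (apply_at 0 Y \<psi>))"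
      using a1 apply_cong eqv_trans by blast
  qed
  have comm_eqv: "\<And>a. a \<noteq> 0 \<Longrightarrow> a < n \<Longrightarrow>
     eqv n (apply_at a X (apply_at 0 Y \<psi>)) (apply_at 0 Y (apply_at 0 X \<psi>))"
    by (subst apply_comm) (auto intro: apply_cong Xm)
  show ?thesis
  proof
    assume S: "in_sym_subspace n ?\<phi>"
    let ?t = "Transposition.transpose (0::nat) 1"
    have tp: "?t permutes {..<n}" using n1 by (intro permutes_swap_id) auto
    have "eqv n (permute_factors n ?t ?\<phi>) (apply_at 1 X (apply_at 0 Y \<psi>))"
      using gen[OF tp] by simp
    hence "eqv n (permute_factors n ?t ?\<phi>) (apply_at 0 Y (apply_at 0 X \<psi>))"
      using comm_eqv[of 1] n1 eqv_trans by blast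
    moreover have "eqv n (permute_factors n ?t ?\<phi>) ?\<phi>" using S tp by (simp add: sym_eqv)
    ultimately have "eqv n (apply_at 0 X (apply_at 0 Y \<psi>)) (apply_at 0 Y (apply_at 0 X \<psi>))"
      using phi by (meson eqv_sym eqv_trans)
    thus "\<forall>xs. length xs = n \<longrightarrow>
       apply_at 0 X (apply_at 0 Y \<psi>) xs - apply_at 0 Y (apply_at 0 X \<psi>) xs = 0"
      by (simp add: eqv_def)
  next
    assume C: "\<forall>xs. length xs = n \<longrightarrow>
       apply_at 0 X (apply_at 0 Y \<psi>) xs - apply_at 0 Y (apply_at 0 X \<psi>) xs = 0"
    hence C': "eqv n (apply_at 0 Y (apply_at 0 X \<psi>)) (apply_at 0 X (apply_at 0 Y \<psi>))"
      by (simp add: eqv_def)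
    show "in_sym_subspace n ?\<phi>"
      unfolding sym_eqv
    proof (intro allI impI)
      fix \<sigma> assume s: "\<sigma> permutes {..<n}"
      have s0': "\<sigma> 0 < n" using permutes_in_image[OF s] n0 by auto
      have "eqv n (apply_at (\<sigma> 0) X (apply_at 0 Y \<psi>)) (apply_at 0 X (apply_at 0 Y \<psi>))"
      proof (cases "\<sigma> 0 = 0")
        case True then show ?thesis by (simp add: eqv_refl)
      next
        case False then show ?thesis using comm_eqv[OF False s0'] C' eqv_trans by blast
      qed
      then show "eqv n (permute_factors n \<sigma> ?\<phi>) ?\<phi>"
        using gen[OF s] phi by (meson eqv_sym eqv_trans)
    qed
  qed
qed

end
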